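(* Let $G$ be a finite graph and $k\ge 1$ an integer. Then $G$ contains a clique of size $k$ if and only if, in the canonical adjacency matrix $\mathbf{M}$ of $G$, all entries $\mathbf{M}_{ij}$ with $1\le i<j\le k$ equal $1$.
   Context: For an $n\times n$ adjacency matrix $\mathbf{M}$ of a finite simple graph (with respect to some ordering of its vertices), its bit-string is obtained by concatenating the entries strictly above the diagonal column by column, left to right, reading each column from top to bottom. The canonical adjacency matrix of a graph $G$ is the unique adjacency matrix of $G$ (over all orderings of its vertices) whose bit-string is lexicographically greatest. *)

theory Defs
  imports Main
begin

text \<open>A finite simple graph: finite nonempty vertex set V and a symmetric,
irreflexive adjacency relation E (only its restriction to V matters).\<close>
definition simple_graph :: "'a set \<Rightarrow> ('a \<Rightarrow> 'a \<Rightarrow> bool) \<Rightarrow> bool" where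
  "simple_graph V E \<longleftrightarrow> finite V \<and> V \<noteq> {} \<and>
     (\<forall>x\<in>V. \<forall>y\<in>V. E x y \<longrightarrow> E y x) \<and> (\<forall>x\<in>V. \<not> E x x)"

text \<open>Adjacency matrix w.r.t. an ordering sigma of the vertices (sigma a bijection
from {0..<n} onto V, n = card V). Indices are 0-based; entries outside the
n x n range are 0.\<close>
definition adj_matrix_of :: "'a set \<Rightarrow> ('a \<Rightarrow> 'a \<Rightarrow> bool) \<Rightarrow> (nat \<Rightarrow> 'a) \<Rightarrow> (nat \<Rightarrow> nat \<Rightarrow> nat)" where
  "adj_matrix_of V E \<sigma> = (\<lambda>i j. if i < card V \<and> j < card V then of_bool (E (\<sigma> i) (\<sigma> j)) else 0)"

definition is_adj_matrix :: "'a set \<Rightarrow> ('a \<Rightarrow> 'a \<Rightarrow> bool) \<Rightarrow> (nat \<Rightarrow> nat \<Rightarrow> nat) \<Rightarrow> bool" where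
  "is_adj_matrix V E M \<longleftrightarrow> (\<exists>\<sigma>. bij_betw \<sigma> {0..<card V} V \<and> M = adj_matrix_of V E \<sigma>)"

definition bitstring :: "nat \<Rightarrow> (nat \<Rightarrow> nat \<Rightarrow> nat) \<Rightarrow> nat list" where
  "bitstring n M = concat (map (\<lambda>j. map (\<lambda>i. M i j) [0..<j]) [0..<n])"

definition is_canonical_adj_matrix :: "'a set \<Rightarrow> ('a \<Rightarrow> 'a \<Rightarrow> bool) \<Rightarrow> (nat \<Rightarrow> nat \<Rightarrow> nat) \<Rightarrow> bool" where
  "is_canonical_adj_matrix V E M \<longleftrightarrow> is_adj_matrix V E M \<and>
     (\<forall>M'. is_adj_matrix V E M' \<longrightarrow>
        bitstring (card V) M' = bitstring (card V) M \<or>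
        (bitstring (card V) M', bitstring (card V) M) \<in> lexord {(a, b). a < b})"

definition canonical_adj_matrix :: "'a set \<Rightarrow> ('a \<Rightarrow> 'a \<Rightarrow> bool) \<Rightarrow> (nat \<Rightarrow> nat \<Rightarrow> nat)" where
  "canonical_adj_matrix V E = (THE M. is_canonical_adj_matrix V E M)"

definition has_clique :: "'a set \<Rightarrow> ('a \<Rightarrow> 'a \<Rightarrow> bool) \<Rightarrow> nat \<Rightarrow> bool" where
  "has_clique V E k \<longleftrightarrow> (\<exists>S\<subseteq>V. card S = k \<and> (\<forall>x\<in>S. \<forall>y\<in>S. x \<noteq> y \<longrightarrow> E x y))"

end

theory Submission
  imports Defs "HOL-Library.List_Lexorder"
begin

lemma bs_Suc: "bitstring (Suc n) M = bitstring n M @ map (\<lambda>i. M i n) [0..<n]"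
  by (simp add: bitstring_def)

lemma bs_len: "length (bitstring n M) = length (bitstring n M')"
  by (induct n) (simp_all add: bs_Suc bitstring_def)

lemma bs_eq_iff: "bitstring n M = bitstring n M' \<longleftrightarrow> (\<forall>j<n. \<forall>i<j. M i j = M' i j)"
proof (induct n)
  case 0 then show ?case by (simp add: bitstring_def)
next
  case (Suc n)
  have "bitstring (Suc n) M = bitstring (Suc n) M' \<longleftrightarrow>
     bitstring n M = bitstring n M' \<and> map (\<lambda>i. M i n) [0..<n] = map (\<lambda>i. M' i n) [0..<n]"
    unfolding bs_Suc using bs_len[of n M M'] by simp
  also have "\<dots> \<longleftrightarrow> (\<forall>j<Suc n. \<forall>i<j. M i j = M' i j)"
    using Suc by (auto simp: less_Suc_eq)
  finally show ?case .
qed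

lemma bs_prefix: "k \<le> n \<Longrightarrow> \<exists>r. bitstring n M = bitstring k M @ r"
proof (induct n rule: dec_induct)
  case base then show ?case by simp
next
  case (step n) then show ?case by (auto simp: bs_Suc)
qed

lemma bs_le1: "(\<And>i j. M i j \<le> 1) \<Longrightarrow> \<forall>x\<in>set (bitstring n M). x \<le> (1::nat)"
  by (auto simp: bitstring_def)

lemma lex_ones: "length xs = length ys \<Longrightarrow> \<forall>x\<in>set xs. x \<le> (1::nat) \<Longrightarrow> \<forall>y\<in>set ys. y = 1
   \<Longrightarrow> ys @ ys' \<le> xs @ xs' \<Longrightarrow> xs = ys"
proof (induct xs arbitrary: ys)
  case Nil then show ?case by simp
next
  case (Cons a xs)
  then obtain y ys0 where ys: "ys = y # ys0" by (cases ys) auto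
  with Cons.prems have y: "y = 1" and a: "a \<le> 1" by auto
  from Cons.prems ys y a have "xs = ys0"
    by (intro Cons.hyps) (auto simp: list_le_def)
  moreover from Cons.prems ys y a have "a = 1" by (auto simp: list_le_def)
  ultimately show ?case using ys y by simp
qed

lemma adj_le1: "is_adj_matrix V E M \<Longrightarrow> M i j \<le> 1"
  by (auto simp: is_adj_matrix_def adj_matrix_of_def)

lemma adj_eq:
  assumes g: "simple_graph V E" and a: "is_adj_matrix V E M" and b: "is_adj_matrix V E M'"
    and eq: "bitstring (card V) M = bitstring (card V) M'"
  shows "M = M'"
proof (intro ext)
  fix i j
  obtain \<sigma> where s: "bij_betw \<sigma> {0..<card V} V" "M = adj_matrix_of V E \<sigma>"
    using a by (auto simp: is_adj_matrix_def)
  obtain \<tau> where t: "bij_betw \<tau> {0..<card V} V" "M' = adj_matrix_of V E \<tau>"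
    using b by (auto simp: is_adj_matrix_def)
  have sV: "\<And>i. i < card V \<Longrightarrow> \<sigma> i \<in> V" using s(1) by (auto simp: bij_betw_def)
  have tV: "\<And>i. i < card V \<Longrightarrow> \<tau> i \<in> V" using t(1) by (auto simp: bij_betw_def)
  have up: "\<And>i j. j < card V \<Longrightarrow> i < j \<Longrightarrow> M i j = M' i j" using eq bs_eq_iff by blast
  have sy: "\<forall>x\<in>V. \<forall>y\<in>V. E x y \<longrightarrow> E y x" using g by (simp add: simple_graph_def)
  have symM: "M i j = M j i" for i j
  proof (cases "i < card V \<and> j < card V")
    case True
    then have "E (\<sigma> i) (\<sigma> j) = E (\<sigma> j) (\<sigma> i)" using sy sV by blast
    then show ?thesis using True unfolding s(2) adj_matrix_of_def by simp
  qed (auto simp: s(2) adj_matrix_of_def)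
  have symM': "M' i j = M' j i" for i j
  proof (cases "i < card V \<and> j < card V")
    case True
    then have "E (\<tau> i) (\<tau> j) = E (\<tau> j) (\<tau> i)" using sy tV by blast
    then show ?thesis using True unfolding t(2) adj_matrix_of_def by simp
  qed (auto simp: t(2) adj_matrix_of_def)
  show "M i j = M' i j"
  proof (cases "i < card V \<and> j < card V")
    case False then show ?thesis by (auto simp: s(2) t(2) adj_matrix_of_def)
  next
    case True
    show ?thesis
    proof (cases "i < j")
      case True then show ?thesis using up \<open>i < card V \<and> j < card V\<close> by blast
    next
      case False
      show ?thesis
      proof (cases "i = j")
        case True then show ?thesis using g sV tV \<open>i < card V \<and> j < card V\<close>
          by (auto simp: s(2) t(2) adj_matrix_of_def simple_graph_def)
      next
        case False
        with \<open>\<not> i < j\<close> have "j < i" by simp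
        then show ?thesis using up[of i j] symM symM' \<open>i < card V \<and> j < card V\<close> by metis
      qed
    qed
  qed
qed

lemma adj_exists: "simple_graph V E \<Longrightarrow> \<exists>M. is_adj_matrix V E M"
  unfolding is_adj_matrix_def simple_graph_def using ex_bij_betw_nat_finite by blast

lemma canon_ex1:
  assumes g: "simple_graph V E"
  shows "\<exists>!M. is_canonical_adj_matrix V E M"
proof -
  let ?n = "card V"
  define B where "B = bitstring ?n ` {M. is_adj_matrix V E M}"
  obtain M1 where M1: "is_adj_matrix V E M1" using adj_exists[OF g] by blast
  have "B \<subseteq> {xs. set xs \<subseteq> {0,1} \<and> length xs = length (bitstring ?n M1)}"
  proof
    fix xs assume "xs \<in> B"
    then obtain M where M: "is_adj_matrix V E M" "xs = bitstring ?n M" unfolding B_def by blast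
    have "\<forall>x\<in>set xs. x \<le> 1" using M bs_le1[of M ?n] adj_le1[OF M(1)] by blast
    then have "set xs \<subseteq> {0,1}" by force
    moreover have "length xs = length (bitstring ?n M1)" using M(2) bs_len by metis
    ultimately show "xs \<in> {xs. set xs \<subseteq> {0,1} \<and> length xs = length (bitstring ?n M1)}" by blast
  qed
  then have fin: "finite B"
    by (rule finite_subset) (rule finite_lists_length_eq, simp)
  have ne: "B \<noteq> {}" using M1 B_def by blast
  have "Max B \<in> B" using fin ne by simp
  then obtain M0 where M0: "is_adj_matrix V E M0" "Max B = bitstring ?n M0"
    unfolding B_def by blast
  have can: "is_canonical_adj_matrix V E M0"
    unfolding is_canonical_adj_matrix_def
  proof (intro conjI allI impI)
    show "is_adj_matrix V E M0" by fact
    fix M' assume "is_adj_matrix V E M'"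
    then have "bitstring ?n M' \<in> B" unfolding B_def by blast
    then have "bitstring ?n M' \<le> bitstring ?n M0" using fin M0(2) by (metis Max_ge)
    then show "bitstring ?n M' = bitstring ?n M0 \<or>
        (bitstring ?n M', bitstring ?n M0) \<in> lexord {(a, b). a < b}"
      by (auto simp: list_le_def list_less_def)
  qed
  moreover have "M = M0" if "is_canonical_adj_matrix V E M" for M
  proof -
    have a: "is_adj_matrix V E M" using that by (simp add: is_canonical_adj_matrix_def)
    have 1: "bitstring ?n M0 \<le> bitstring ?n M" using that M0(1)
      by (auto simp: is_canonical_adj_matrix_def list_le_def list_less_def)
    have 2: "bitstring ?n M \<le> bitstring ?n M0" using can a
      by (auto simp: is_canonical_adj_matrix_def list_le_def list_less_def)
    from 1 2 have "bitstring ?n M = bitstring ?n M0" by simp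
    then show ?thesis using adj_eq[OF g a M0(1)] by simp
  qed
  ultimately show ?thesis by blast
qed

lemma canon_props:
  assumes g: "simple_graph V E"
  shows "is_canonical_adj_matrix V E (canonical_adj_matrix V E)"
  unfolding canonical_adj_matrix_def using theI'[OF canon_ex1[OF g]] .

theorem mainTheorem9:
  fixes V :: "'a set" and E :: "'a \<Rightarrow> 'a \<Rightarrow> bool" and k :: nat
  assumes "simple_graph V E" and "k \<ge> 1"
  shows "has_clique V E k \<longleftrightarrow>
         (\<forall>i j. i < j \<and> j < k \<longrightarrow> canonical_adj_matrix V E i j = 1)"
proof -
  note g = assms(1)
  define M where "M = canonical_adj_matrix V E"
  define n where "n = card V"
  have can: "is_canonical_adj_matrix V E M" using canon_props[OF g] M_def by simp
  then obtain \<sigma> where s: "bij_betw \<sigma> {0..<n} V" "M = adj_matrix_of V E \<sigma>"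
    by (auto simp: is_canonical_adj_matrix_def is_adj_matrix_def n_def)
  have fin: "finite V" and ne: "V \<noteq> {}" and sym: "\<And>x y. x \<in> V \<Longrightarrow> y \<in> V \<Longrightarrow> E x y \<Longrightarrow> E y x"
    using g by (auto simp: simple_graph_def)
  have sV: "\<And>i. i < n \<Longrightarrow> \<sigma> i \<in> V" using s(1) by (auto simp: bij_betw_def)
  show ?thesis unfolding M_def[symmetric]
  proof
    assume "has_clique V E k"
    then obtain S where S: "S \<subseteq> V" "card S = k" "\<forall>x\<in>S. \<forall>y\<in>S. x \<noteq> y \<longrightarrow> E x y"
      by (auto simp: has_clique_def)
    have kn: "k \<le> n" using S fin card_mono n_def by blast
    have finS: "finite S" using S(1) fin finite_subset by blast
    obtain \<alpha> where a: "bij_betw \<alpha> {0..<k} S" using ex_bij_betw_nat_finite[OF finS] S(2) by blast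
    have cVS: "card (V - S) = n - k" using S fin n_def by (simp add: card_Diff_subset finS)
    obtain \<beta> where b: "bij_betw \<beta> {0..<n-k} (V - S)"
      using ex_bij_betw_nat_finite[of "V - S"] fin cVS by auto
    have sh: "bij_betw (\<lambda>i. i - k) {k..<n} {0..<n-k}"
      by (rule bij_betw_byWitness[where f'="\<lambda>i. i + k"]) auto
    have b2: "bij_betw (\<lambda>i. \<beta> (i - k)) {k..<n} (V - S)"
      using bij_betw_trans[OF sh b] by (simp add: comp_def)
    define \<tau> where "\<tau> = (\<lambda>i. if i \<in> {0..<k} then \<alpha> i else \<beta> (i - k))"
    have "bij_betw \<tau> ({0..<k} \<union> {k..<n}) (S \<union> (V - S))"
      unfolding \<tau>_def by (rule bij_betw_disjoint_Un[OF a b2]) auto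
    moreover have "{0..<k} \<union> {k..<n} = {0..<n}" using kn by auto
    moreover have "S \<union> (V - S) = V" using S by auto
    ultimately have t: "bij_betw \<tau> {0..<n} V" by simp
    define Mt where "Mt = adj_matrix_of V E \<tau>"
    have adjt: "is_adj_matrix V E Mt" using t Mt_def by (auto simp: is_adj_matrix_def n_def)
    have "bitstring n Mt \<le> bitstring n M" using can adjt
      by (auto simp: is_canonical_adj_matrix_def list_le_def list_less_def n_def)
    moreover obtain r where r: "bitstring n M = bitstring k M @ r" using bs_prefix[OF kn] by blast
    moreover obtain rt where rt: "bitstring n Mt = bitstring k Mt @ rt" using bs_prefix[OF kn] by blast
    ultimately have le: "bitstring k Mt @ rt \<le> bitstring k M @ r" by simp
    have ones: "\<forall>y\<in>set (bitstring k Mt). y = 1"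
    proof
      fix y assume "y \<in> set (bitstring k Mt)"
      then obtain i j where ij: "i < j" "j < k" "y = Mt i j" by (auto simp: bitstring_def)
      have "\<alpha> i \<in> S" "\<alpha> j \<in> S" using a ij by (auto simp: bij_betw_def)
      moreover have "\<alpha> i \<noteq> \<alpha> j" using a ij unfolding bij_betw_def inj_on_def
        by (metis atLeastLessThan_iff less_irrefl order.strict_trans zero_le)
      ultimately have "\<alpha> i \<in> S" "\<alpha> j \<in> S" "\<alpha> i \<noteq> \<alpha> j" by auto
      then show "y = 1" using ij kn S(3) by (auto simp: Mt_def adj_matrix_of_def \<tau>_def n_def)
    qed
    have "bitstring k M = bitstring k Mt"
    proof (rule lex_ones[OF bs_len _ ones le])
      have "is_adj_matrix V E M" using can by (simp add: is_canonical_adj_matrix_def)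
      then show "\<forall>x\<in>set (bitstring k M). x \<le> 1" by (rule bs_le1[OF adj_le1])
    qed
    then have "\<forall>j<k. \<forall>i<j. M i j = Mt i j" using bs_eq_iff by blast
    moreover have "\<forall>j<k. \<forall>i<j. Mt i j = 1" using ones by (auto simp: bitstring_def)
    ultimately show "\<forall>i j. i < j \<and> j < k \<longrightarrow> M i j = 1" by auto
  next
    assume H: "\<forall>i j. i < j \<and> j < k \<longrightarrow> M i j = 1"
    show "has_clique V E k"
    proof (cases "k = 1")
      case True
      obtain x where "x \<in> V" using ne by blast
      then show ?thesis unfolding has_clique_def True by (intro exI[of _ "{x}"]) auto
    next
      case False
      have kn: "k \<le> n"
      proof (rule ccontr)
        assume "\<not> k \<le> n"
        then have "M 0 (k - 1) = 0" using s(2) by (auto simp: adj_matrix_of_def n_def)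
        moreover have "M 0 (k - 1) = 1" using H False assms(2) by auto
        ultimately show False by simp
      qed
      have inj: "inj_on \<sigma> {0..<k}" using s(1) kn by (auto simp: bij_betw_def inj_on_def)
      have E1: "E (\<sigma> i) (\<sigma> j)" if "i < j" "j < k" for i j
      proof -
        have "M i j = 1" using H that by blast
        then show ?thesis using that kn s(2) by (auto simp: adj_matrix_of_def n_def of_bool_def split: if_splits)
      qed
      show ?thesis unfolding has_clique_def
      proof (intro exI[of _ "\<sigma> ` {0..<k}"] conjI)
        show "\<sigma> ` {0..<k} \<subseteq> V" using sV kn by auto
        show "card (\<sigma> ` {0..<k}) = k" using card_image[OF inj] by simp
        show "\<forall>x\<in>\<sigma> ` {0..<k}. \<forall>y\<in>\<sigma> ` {0..<k}. x \<noteq> y \<longrightarrow> E x y"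
        proof (intro ballI impI)
          fix x y assume "x \<in> \<sigma> ` {0..<k}" "y \<in> \<sigma> ` {0..<k}" "x \<noteq> y"
          then obtain i j where ij: "i < k" "j < k" "x = \<sigma> i" "y = \<sigma> j" "i \<noteq> j" by (metis atLeastLessThan_iff imageE)
          show "E x y"
          proof (cases "i < j")
            case True then show ?thesis using E1 ij by simp
          next
            case False
            then have "E y x" using E1 ij by simp
            then show ?thesis using sym sV ij kn by simp
          qed
        qed
      qed
    qed
  qed
qed

end
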